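(* Let $n\ge1$, let $\Delta\subset\mathbb{R}^n$ be an $n$-simplex with vertices $\mathbf{x}_0,\dots,\mathbf{x}_n$, let $f\colon\Delta\to\mathbb{R}$ be convex, and let $k$ be an integer with $1\le k\le n+1$. Then $$\operatorname{Avg}(f,\Delta)\le \alpha_n\frac{1}{\binom{n+1}{k}}\sum_{\substack{K\subset N\\ \operatorname{card}K=k}}f(\mathbf{b}_K)+(1-\alpha_n)\frac{f(\mathbf{x}_0)+\dots+f(\mathbf{x}_n)}{n+1},\qquad \alpha_n=\frac{\lfloor (n+1)/k\rfloor}{n+1},$$ where $N=\{0,\dots,n\}$ and $\mathbf{b}_K=\frac{1}{\operatorname{card}K}\sum_{i\in K}\mathbf{x}_i$.
   Context: $\mathbf{x}_0,\dots,\mathbf{x}_n\in\mathbb{R}^n$ are affinely independent and $\Delta=\operatorname{conv}\{\mathbf{x}_0,\dots,\mathbf{x}_n\}$. $\operatorname{Avg}(f,\Delta)=\frac{1}{\operatorname{Vol}_n(\Delta)}\int_\Delta f(\mathbf{x})\,d\mathbf{x}$ (Lebesgue measure on $\mathbb{R}^n$). *)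

theory Defs
  imports "HOL-Analysis.Analysis"
begin

definition Avg :: "('a::euclidean_space \<Rightarrow> real) \<Rightarrow> 'a set \<Rightarrow> real" where
  "Avg f S = (LINT x:S|lebesgue. f x) / measure lebesgue S"

definition bary :: "(nat \<Rightarrow> 'a::real_vector) \<Rightarrow> nat set \<Rightarrow> 'a" where
  "bary x K = (1 / real (card K)) *\<^sub>R (\<Sum>i\<in>K. x i)"

end

theory Submission
  imports Defs
begin


definition cnt :: "nat \<Rightarrow> real \<Rightarrow> real" where
  "cnt M y = (\<Sum>j\<in>{1..<M}. if real j \<le> y then 1 else 0)"

lemma cnt_Suc: "cnt (Suc M) y = cnt M y + (if 1 \<le> M \<and> real M \<le> y then 1 else 0)"
proof (cases "1 \<le> M")
  case True then show ?thesis unfolding cnt_def by (simp add: sum.atLeastLessThan_Suc)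
next
  case False then have "M = 0" by simp
  then show ?thesis unfolding cnt_def by simp
qed

lemma cnt_bound: "cnt M y \<le> real M - 1 \<or> M = 0"
proof -
  have "cnt M y \<le> (\<Sum>j\<in>{1..<M}. 1)" unfolding cnt_def by (intro sum_mono) auto
  then show ?thesis by (cases M) auto
qed

lemma cnt_le: "0 \<le> y \<Longrightarrow> cnt M y \<le> y"
proof (induction M)
  case 0 then show ?case by (simp add: cnt_def)
next
  case (Suc M)
  show ?case
  proof (cases "1 \<le> M \<and> real M \<le> y")
    case True
    then have "cnt M y \<le> real M - 1" using cnt_bound[of M y] by auto
    then show ?thesis using True by (simp add: cnt_Suc)
  next
    case False then show ?thesis using Suc by (auto simp: cnt_Suc)
  qed
qed

lemma cnt_full: "real M - 1 \<le> y \<Longrightarrow> cnt M y = real M - 1 \<or> M = 0"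
proof -
  assume a: "real M - 1 \<le> y"
  have "cnt M y = (\<Sum>j\<in>{1..<M}. 1)" unfolding cnt_def using a by (intro sum.cong) auto
  then show ?thesis by (cases M) auto
qed

lemma cnt_ge: "0 \<le> y \<Longrightarrow> y \<le> real M \<Longrightarrow> y \<le> 1 + cnt M y"
proof (induction M)
  case 0 then show ?case by (simp add: cnt_def)
next
  case (Suc M)
  show ?case
  proof (cases "y \<le> real M")
    case True
    then have "y \<le> 1 + cnt M y" using Suc by simp
    then show ?thesis by (simp add: cnt_Suc)
  next
    case False
    show ?thesis
    proof (cases "M = 0")
      case True then show ?thesis using Suc by (simp add: cnt_def)
    next
      case M: False
      then have "cnt M y = real M - 1" using cnt_full[of M y] False by auto
      then show ?thesis using False M Suc by (simp add: cnt_Suc)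
    qed
  qed
qed

lemma pow_step:
  fixes a :: real assumes a: "0 \<le> a"
  shows "real (n+1) * a ^ n \<le> (a+1)^(n+1) - a^(n+1)"
    and "(a+1)^(n+1) - a^(n+1) \<le> real (n+1) * (a+1) ^ n"
proof -
  have e: "(a+1)^(n+1) - a^(n+1) = (\<Sum>i<n+1. a ^ (n + 1 - Suc i) * (a+1) ^ i)"
    using power_diff_sumr2[of "a+1" "n+1" a] by simp
  have t1: "a ^ n \<le> a ^ (n + 1 - Suc i) * (a+1) ^ i" if "i < n+1" for i
  proof -
    have "a ^ n = a ^ (n - i) * a ^ i" using that by (simp add: power_add[symmetric])
    also have "\<dots> \<le> a ^ (n - i) * (a+1) ^ i" using a by (intro mult_left_mono power_mono) auto
    finally show ?thesis by simp
  qed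
  have t2: "a ^ (n + 1 - Suc i) * (a+1) ^ i \<le> (a+1) ^ n" if "i < n+1" for i
  proof -
    have "a ^ (n - i) * (a+1) ^ i \<le> (a+1) ^ (n - i) * (a+1) ^ i" using a by (intro mult_right_mono power_mono) auto
    also have "\<dots> = (a+1) ^ n" using that by (simp add: power_add[symmetric])
    finally show ?thesis by simp
  qed
  have "(\<Sum>i<n+1. a ^ n) \<le> (\<Sum>i<n+1. a ^ (n + 1 - Suc i) * (a+1) ^ i)" by (intro sum_mono t1) auto
  then show "real (n+1) * a ^ n \<le> (a+1)^(n+1) - a^(n+1)" using e by simp
  have "(\<Sum>i<n+1. a ^ (n + 1 - Suc i) * (a+1) ^ i) \<le> (\<Sum>i<n+1. (a+1) ^ n)" by (intro sum_mono t2) auto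
  then show "(a+1)^(n+1) - a^(n+1) \<le> real (n+1) * (a+1) ^ n" using e by simp
qed

lemma psum:
  "real (n+1) * (\<Sum>i<M. real i ^ n) \<le> real M ^ (n+1) \<and>
   real M ^ (n+1) \<le> real (n+1) * ((\<Sum>i<M. real i ^ n) + real M ^ n)"
proof (induction M)
  case 0 then show ?case by simp
next
  case (Suc M)
  have s1: "real (n+1) * real M ^ n \<le> real (Suc M) ^ (n+1) - real M ^ (n+1)"
    using pow_step(1)[of "real M" n] by (simp add: add.commute)
  have s2: "real (Suc M) ^ (n+1) - real M ^ (n+1) \<le> real (n+1) * real (Suc M) ^ n"
    using pow_step(2)[of "real M" n] by (simp add: add.commute)
  show ?case using Suc s1 s2 by (simp add: distrib_left)
qed

lemma zero_by_eps:
  fixes d E :: real assumes "E \<ge> 0" "\<And>M::nat. (1::nat) \<le> M \<Longrightarrow> \<bar>d\<bar> \<le> E / real M"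
  shows "d = 0"
proof (rule ccontr)
  assume "d \<noteq> 0"
  then have dp: "\<bar>d\<bar> > 0" by simp
  obtain M :: nat where M: "E / \<bar>d\<bar> < M" using reals_Archimedean2 by blast
  define M' where "M' = max M 1"
  have M'1: "(1::nat) \<le> M'" unfolding M'_def by simp
  have "E / \<bar>d\<bar> < M'" using M unfolding M'_def by linarith
  then have "E < \<bar>d\<bar> * M'" using dp by (simp add: field_simps)
  then have "E / M' < \<bar>d\<bar>" using M'1 by (simp add: field_simps)
  with assms(2)[OF M'1] show False by simp
qed

lemma set_integral_sum_real:
  fixes f :: "'i \<Rightarrow> 'b \<Rightarrow> real"
  assumes "finite I" "\<And>i. i \<in> I \<Longrightarrow> set_integrable M A (f i)"
  shows "set_integrable M A (\<lambda>x. \<Sum>i\<in>I. f i x) \<and>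
         (\<integral>x\<in>A. (\<Sum>i\<in>I. f i x) \<partial>M) = (\<Sum>i\<in>I. (\<integral>x\<in>A. f i x \<partial>M))"
  using assms
proof (induction I rule: finite_induct)
  case empty
  then show ?case by (simp add: set_integrable_def set_lebesgue_integral_def)
next
  case (insert a I)
  then have ia: "set_integrable M A (f a)" and IH: "set_integrable M A (\<lambda>x. \<Sum>i\<in>I. f i x)"
      "(\<integral>x\<in>A. (\<Sum>i\<in>I. f i x) \<partial>M) = (\<Sum>i\<in>I. (\<integral>x\<in>A. f i x \<partial>M))" by auto
  show ?case using insert(1,2) set_integral_add(1)[OF ia IH(1)] set_integral_add(2)[OF ia IH(1)] IH(2) by simp
qed

lemma swap_sum:
  fixes g :: "nat set \<Rightarrow> nat \<Rightarrow> 'b::comm_monoid_add"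
  assumes fin: "finite KK" "finite N" and sub: "\<And>K. K \<in> KK \<Longrightarrow> K \<subseteq> N"
  shows "(\<Sum>K\<in>KK. \<Sum>i\<in>K. g K i) = (\<Sum>i\<in>N. \<Sum>K\<in>{K\<in>KK. i \<in> K}. g K i)"
proof -
  have "(\<Sum>K\<in>KK. \<Sum>i\<in>K. g K i) = (\<Sum>K\<in>KK. \<Sum>i\<in>N. if i \<in> K then g K i else 0)"
  proof (rule sum.cong[OF refl])
    fix K assume K: "K \<in> KK"
    have "K \<inter> N = K" using sub[OF K] by blast
    then show "(\<Sum>i\<in>K. g K i) = (\<Sum>i\<in>N. if i \<in> K then g K i else 0)"
      using sum.inter_restrict[OF fin(2), of "g K" K] by (simp add: inf.commute)
  qed
  also have "\<dots> = (\<Sum>i\<in>N. \<Sum>K\<in>KK. if i \<in> K then g K i else 0)" by (rule sum.swap)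
  also have "\<dots> = (\<Sum>i\<in>N. \<Sum>K\<in>{K\<in>KK. i \<in> K}. g K i)"
    by (rule sum.cong[OF refl]) (simp add: sum.inter_filter[OF fin(1)])
  finally show ?thesis .
qed


lemma aux_mul: "(m::real) \<noteq> 0 \<Longrightarrow> m * ((1/m)*a + (c/m)*b) = a + c*b" by (simp add: field_simps)

lemma aux2: "(m::real) \<noteq> 0 \<Longrightarrow> kk \<noteq> 0 \<Longrightarrow> (V / m) * X - (V/(kk*m)) * X = V*((1 - 1/kk)*(X/m))" by (simp add: field_simps)

locale simplex =
  fixes x :: "nat \<Rightarrow> 'a::euclidean_space" and n :: nat
  assumes dim: "DIM('a) = n" and inj: "inj_on x {0..n}"
    and indep: "\<not> affine_dependent (x ` {0..n})"
begin

definition "S = convex hull (x ` {0..n})"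

lemma n_pos: "n \<ge> 1" using dim DIM_positive[where 'a='a] by simp

lemma S_iff: "p \<in> S \<longleftrightarrow> (\<exists>u. (\<forall>i\<in>{0..n}. 0 \<le> u i) \<and> sum u {0..n} = 1 \<and> (\<Sum>i\<in>{0..n}. u i *\<^sub>R x i) = p)" (is "_ \<longleftrightarrow> ?R")
proof -
  have fin: "finite (x ` {0..n})" by simp
  have "p \<in> S \<longleftrightarrow> (\<exists>u. (\<forall>y\<in>x`{0..n}. 0 \<le> u y) \<and> sum u (x`{0..n}) = 1 \<and> (\<Sum>y\<in>x`{0..n}. u y *\<^sub>R y) = p)"
    unfolding S_def convex_hull_finite[OF fin] by simp
  also have "\<dots> \<longleftrightarrow> ?R"
  proof
    assume "\<exists>u. (\<forall>y\<in>x`{0..n}. 0 \<le> u y) \<and> sum u (x`{0..n}) = 1 \<and> (\<Sum>y\<in>x`{0..n}. u y *\<^sub>R y) = p"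
    then obtain u where u: "\<forall>y\<in>x`{0..n}. 0 \<le> u y" "sum u (x`{0..n}) = 1" "(\<Sum>y\<in>x`{0..n}. u y *\<^sub>R y) = p" by blast
    show ?R
      apply (rule exI[of _ "u \<circ> x"])
      using u by (simp add: sum.reindex[OF inj])
  next
    assume ?R
    then obtain u where u: "\<forall>i\<in>{0..n}. 0 \<le> u i" "sum u {0..n} = 1" "(\<Sum>i\<in>{0..n}. u i *\<^sub>R x i) = p" by blast
    define v where "v = u \<circ> inv_into {0..n} x"
    have vx: "v (x i) = u i" if "i \<in> {0..n}" for i
      using inv_into_f_f[OF inj that] by (simp add: v_def)
    have e1: "(\<Sum>j\<in>{0..n}. v (x j)) = (\<Sum>j\<in>{0..n}. u j)"
      by (rule sum.cong) (auto simp: vx)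
    have e2: "(\<Sum>j\<in>{0..n}. v (x j) *\<^sub>R x j) = (\<Sum>j\<in>{0..n}. u j *\<^sub>R x j)"
      by (rule sum.cong) (auto simp: vx)
    have "(\<forall>y\<in>x`{0..n}. 0 \<le> v y) \<and> sum v (x`{0..n}) = 1 \<and> (\<Sum>y\<in>x`{0..n}. v y *\<^sub>R y) = p"
      using u by (simp add: sum.reindex[OF inj] vx e1 e2)
    then show "\<exists>u. (\<forall>y\<in>x`{0..n}. 0 \<le> u y) \<and> sum u (x`{0..n}) = 1 \<and> (\<Sum>y\<in>x`{0..n}. u y *\<^sub>R y) = p" by blast
  qed
  finally show ?thesis .
qed

lemma unique:
  assumes "sum u {0..n} = 1" "sum v {0..n} = 1"
    "(\<Sum>i\<in>{0..n}. u i *\<^sub>R x i) = (\<Sum>i\<in>{0..n}. v i *\<^sub>R x i)" "i \<in> {0..n}"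
  shows "u i = v i"
proof (rule ccontr)
  assume ne: "u i \<noteq> v i"
  define U where "U = (\<lambda>i. u i - v i) \<circ> inv_into {0..n} x"
  have Ux: "U (x j) = u j - v j" if "j \<in> {0..n}" for j
    using inv_into_f_f[OF inj that] by (simp add: U_def)
  have e1: "(\<Sum>j\<in>{0..n}. U (x j)) = (\<Sum>j\<in>{0..n}. u j - v j)"
    by (rule sum.cong) (auto simp: Ux)
  have e2: "(\<Sum>j\<in>{0..n}. U (x j) *\<^sub>R x j) = (\<Sum>j\<in>{0..n}. (u j - v j) *\<^sub>R x j)"
    by (rule sum.cong) (auto simp: Ux)
  have "sum U (x`{0..n}) = 0"
    using assms(1,2) by (simp add: sum.reindex[OF inj] e1 sum_subtractf)
  moreover have "sum (\<lambda>y. U y *\<^sub>R y) (x`{0..n}) = 0"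
    using assms(3) by (simp add: sum.reindex[OF inj] e2 scaleR_diff_left sum_subtractf)
  moreover have "\<exists>y\<in>x`{0..n}. U y \<noteq> 0" using ne assms(4) Ux by force
  ultimately have "affine_dependent (x`{0..n})"
    using affine_dependent_explicit_finite[of "x`{0..n}"] by auto
  with indep show False by simp
qed

definition bc :: "'a \<Rightarrow> nat \<Rightarrow> real" where
  "bc p = (SOME u. (\<forall>i\<in>{0..n}. 0 \<le> u i) \<and> sum u {0..n} = 1 \<and> (\<Sum>i\<in>{0..n}. u i *\<^sub>R x i) = p)"

lemma bc: assumes "p \<in> S"
  shows "\<forall>i\<in>{0..n}. 0 \<le> bc p i" "sum (bc p) {0..n} = 1" "(\<Sum>i\<in>{0..n}. bc p i *\<^sub>R x i) = p"
  using someI_ex[OF assms[unfolded S_iff]] unfolding bc_def by blast+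

lemma bc_eq:
  assumes "\<forall>i\<in>{0..n}. 0 \<le> u i" "sum u {0..n} = 1" "(\<Sum>i\<in>{0..n}. u i *\<^sub>R x i) = p" "i \<in> {0..n}"
  shows "bc p i = u i"
proof -
  have "p \<in> S" using assms S_iff by blast
  from bc[OF this] assms show ?thesis using unique[of "bc p" u i] by simp
qed

lemma S_compact: "compact S" unfolding S_def by (intro compact_convex_hull finite_imp_compact) simp
lemma S_convex: "convex S" unfolding S_def by simp
lemma S_closed: "closed S" using S_compact compact_imp_closed by blast
lemma S_lmeas: "S \<in> lmeasurable" using S_compact lmeasurable_compact by blast
lemma x_in_S: "i \<in> {0..n} \<Longrightarrow> x i \<in> S" unfolding S_def by (meson hull_subset image_eqI subsetD)

lemma bc_le1: assumes "p \<in> S" "i \<in> {0..n}" shows "bc p i \<le> 1"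
proof -
  have "bc p i \<le> sum (bc p) {0..n}" using bc(1)[OF assms(1)] assms(2)
    by (intro member_le_sum) auto
  then show ?thesis using bc(2)[OF assms(1)] by simp
qed

lemma interior_ne: "interior S \<noteq> {}"
proof -
  have "card (x ` {0..n}) = Suc DIM('a)" using card_image[OF inj] dim by simp
  then show ?thesis using interior_convex_hull_eq_empty indep unfolding S_def by blast
qed

lemma V_pos: "measure lebesgue S > 0"
proof -
  have "\<not> negligible (interior S)" using open_not_negligible interior_ne by blast
  then have "\<not> negligible S" using negligible_subset interior_subset by blast
  then have "measure lebesgue S \<noteq> 0" using negligible_iff_measure0[OF S_lmeas] by simp
  then show ?thesis using measure_nonneg[of lebesgue S] by linarith
qed

lemma convex_bounded:
  assumes g: "convex_on S g"
  shows "\<exists>B. \<forall>p\<in>S. \<bar>g p\<bar> \<le> B"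
proof -
  define Bv where "Bv = (\<Sum>i\<in>{0..n}. \<bar>g (x i)\<bar>)"
  have gx: "g (x i) \<le> Bv" if "i \<in> {0..n}" for i
  proof -
    have "\<bar>g (x i)\<bar> \<le> Bv" unfolding Bv_def using that by (intro member_le_sum) auto
    then show ?thesis by simp
  qed
  have up: "g p \<le> Bv" if p: "p \<in> S" for p
  proof -
    have "g p = g (\<Sum>i\<in>{0..n}. bc p i *\<^sub>R x i)" using bc(3)[OF p] by simp
    also have "\<dots> \<le> (\<Sum>i\<in>{0..n}. bc p i * g (x i))"
      using bc[OF p] x_in_S by (intro convex_on_sum[OF _ _ g]) auto
    also have "\<dots> \<le> (\<Sum>i\<in>{0..n}. bc p i * Bv)"
      using bc(1)[OF p] gx by (intro sum_mono mult_left_mono) auto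
    also have "\<dots> = Bv" using bc(2)[OF p] by (simp add: sum_distrib_right[symmetric])
    finally show ?thesis .
  qed
  define c where "c = (\<Sum>i\<in>{0..n}. (1 / real (n+1)) *\<^sub>R x i)"
  have cS: "c \<in> S" unfolding c_def S_iff by (intro exI[of _ "\<lambda>i. 1 / real (n+1)"]) auto
  have low: "(n+1) * g c - n * Bv \<le> g p" if p: "p \<in> S" for p
  proof -
    define q where "q = (\<Sum>i\<in>{0..n}. ((1 - bc p i) / n) *\<^sub>R x i)"
    have "sum (\<lambda>i. (1 - bc p i) / n) {0..n} = (real (n+1) - 1) / n"
      using bc(2)[OF p] by (simp add: sum_divide_distrib[symmetric] sum_subtractf)
    also have "\<dots> = 1" using n_pos by simp
    finally have qs: "sum (\<lambda>i. (1 - bc p i) / n) {0..n} = 1" .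
    have qS: "q \<in> S" unfolding q_def S_iff
      using bc_le1[OF p] qs by (intro exI[of _ "\<lambda>i. (1 - bc p i) / n"]) auto
    have e1: "(1 - real n / (n+1)) *\<^sub>R p = (\<Sum>i\<in>{0..n}. ((1 - real n / (n+1)) * bc p i) *\<^sub>R x i)"
    proof -
      have "(1 - real n / (n+1)) *\<^sub>R (\<Sum>i\<in>{0..n}. bc p i *\<^sub>R x i) = (\<Sum>i\<in>{0..n}. ((1 - real n / (n+1)) * bc p i) *\<^sub>R x i)"
        by (simp add: scaleR_sum_right)
      then show ?thesis using bc(3)[OF p] by simp
    qed
    have e2: "(real n / (n+1)) *\<^sub>R q = (\<Sum>i\<in>{0..n}. ((real n / (n+1)) * ((1 - bc p i) / n)) *\<^sub>R x i)"
      unfolding q_def by (simp add: scaleR_sum_right)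
    have "(1 - real n / (n+1)) *\<^sub>R p + (real n / (n+1)) *\<^sub>R q
        = (\<Sum>i\<in>{0..n}. ((1 - real n / (n+1)) * bc p i + (real n / (n+1)) * ((1 - bc p i) / n)) *\<^sub>R x i)"
      unfolding e1 e2 by (simp add: sum.distrib[symmetric] scaleR_add_left)
    also have "\<dots> = c"
    proof -
      have co: "(1 - real n / (n+1)) * b + (real n / (n+1)) * ((1 - b) / n) = 1 / real (n+1)" for b
      proof -
        have nz: "real n \<noteq> 0" using n_pos by auto
        have a1: "1 - real n/(n+1) = 1/(n+1)" by (simp add: field_simps)
        have a2: "(real n/(n+1))*((1-b)/n) = (1-b)/(n+1)" using nz by simp
        show ?thesis unfolding a1 a2 by (simp add: field_simps)
      qed
      show ?thesis unfolding c_def co ..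
    qed
    finally have ceq: "(1 - real n / (n+1)) *\<^sub>R p + (real n / (n+1)) *\<^sub>R q = c" .
    have "g c \<le> (1 - real n / (n+1)) * g p + (real n / (n+1)) * g q"
      using convex_onD[OF g, of "real n / (n+1)" p q] p qS ceq by simp
    also have "\<dots> \<le> (1 - real n / (n+1)) * g p + (real n / (n+1)) * Bv"
      using up[OF qS] by (intro add_left_mono mult_left_mono) auto
    finally have "g c \<le> (1 / (n+1)) * g p + (real n / (n+1)) * Bv"
      by (simp add: field_simps)
    then have "real (n+1) * g c \<le> real (n+1) * ((1 / real (n+1)) * g p + (real n / real (n+1)) * Bv)"
      by (intro mult_left_mono) auto
    also have "\<dots> = g p + n * Bv" by (rule aux_mul) simp
    finally show ?thesis by simp
  qed
  show ?thesis
    apply (rule exI[of _ "\<bar>(n+1) * g c - n * Bv\<bar> + \<bar>Bv\<bar>"])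
    using up low by (smt (verit, best))
qed

lemma convex_integrable:
  assumes g: "convex_on S g"
  shows "set_integrable lebesgue S g"
proof -
  obtain B where B: "\<forall>p\<in>S. \<bar>g p\<bar> \<le> B" using convex_bounded[OF g] by blast
  let ?I = "interior S"
  have cont: "continuous_on ?I g"
    using convex_on_continuous[OF open_interior convex_on_subset[OF g interior_subset convex_interior[OF S_convex]]] .
  have mI: "g \<in> borel_measurable (lebesgue_on ?I)"
    by (intro continuous_imp_measurable_on_sets_lebesgue cont) (simp add: borel_open)
  have fr: "negligible (S - ?I)"
    using negligible_convex_frontier[OF S_convex] unfolding frontier_def closure_closed[OF S_closed] .
  have meas: "(\<lambda>p. indicator S p *\<^sub>R g p) \<in> borel_measurable lebesgue"
    unfolding borel_measurable_iff_ge
  proof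
    fix a :: real
    have e: "{w \<in> space lebesgue. a \<le> indicator S w *\<^sub>R g w} =
      {w \<in> ?I. a \<le> g w} \<union> {w \<in> S - ?I. a \<le> g w} \<union> {w. w \<notin> S \<and> a \<le> 0}"
      using interior_subset[of S] by (auto simp: indicator_def)
    have s1: "{w \<in> ?I. a \<le> g w} \<in> sets lebesgue"
    proof -
      have "{w \<in> space (lebesgue_on ?I). a \<le> g w} \<in> sets (lebesgue_on ?I)"
        using mI unfolding borel_measurable_iff_ge by blast
      then show ?thesis
        by (subst (asm) sets_restrict_space_iff) (auto simp: borel_open)
    qed
    have s2: "{w \<in> S - ?I. a \<le> g w} \<in> sets lebesgue"
      by (rule negligible_imp_sets, rule negligible_subset[OF fr]) auto
    have s3: "{w. w \<notin> S \<and> a \<le> 0} \<in> sets lebesgue"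
    proof (cases "a \<le> 0")
      case True
      then have "{w. w \<notin> S \<and> a \<le> 0} = - S" by auto
      then show ?thesis using S_closed by (simp add: borel_open open_Compl)
    qed simp
    show "{w \<in> space lebesgue. a \<le> indicator S w *\<^sub>R g w} \<in> sets lebesgue"
      unfolding e using s1 s2 s3 by blast
  qed
  show ?thesis unfolding set_integrable_def
  proof (rule integrableI_bounded_set[where A=S and B=B])
    show "S \<in> sets lebesgue" using S_lmeas by blast
    show "emeasure lebesgue S < \<infinity>" using fmeasurableD2[OF S_lmeas] by (simp add: less_top)
  qed (use meas B in \<open>auto simp: indicator_def\<close>)
qed

lemma sum_if_sub: "K \<subseteq> {0..n} \<Longrightarrow> (\<Sum>i\<in>{0..n}. if i \<in> K then g i else 0) = (\<Sum>i\<in>K. g i)"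
proof -
  assume K: "K \<subseteq> {0..n}"
  have "K \<inter> {0..n} = K" using K by blast
  then show ?thesis using sum.inter_restrict[of "{0..n}" g K] by (simp add: inf.commute)
qed

lemma bc_affine:
  assumes p: "p \<in> S" and q: "q \<in> S" and ab: "0 \<le> a" "0 \<le> b" "a + b = 1" and i: "i \<in> {0..n}"
  shows "bc (a *\<^sub>R p + b *\<^sub>R q) i = a * bc p i + b * bc q i"
proof (rule bc_eq[OF _ _ _ i])
  show "\<forall>i\<in>{0..n}. 0 \<le> a * bc p i + b * bc q i" using bc(1)[OF p] bc(1)[OF q] ab by auto
  show "(\<Sum>i\<in>{0..n}. a * bc p i + b * bc q i) = 1"
    using bc(2)[OF p] bc(2)[OF q] ab by (simp add: sum.distrib sum_distrib_left[symmetric])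
  have "(\<Sum>i\<in>{0..n}. (a * bc p i + b * bc q i) *\<^sub>R x i)
      = a *\<^sub>R (\<Sum>i\<in>{0..n}. bc p i *\<^sub>R x i) + b *\<^sub>R (\<Sum>i\<in>{0..n}. bc q i *\<^sub>R x i)"
    by (simp add: scaleR_sum_right sum.distrib scaleR_add_left)
  then show "(\<Sum>i\<in>{0..n}. (a * bc p i + b * bc q i) *\<^sub>R x i) = a *\<^sub>R p + b *\<^sub>R q"
    using bc(3)[OF p] bc(3)[OF q] by simp
qed

definition mu :: "nat set \<Rightarrow> 'a \<Rightarrow> real" where "mu K p = Min ((\<lambda>i. bc p i) ` K)"

lemma mu_ge_iff: "finite K \<Longrightarrow> K \<noteq> {} \<Longrightarrow> t \<le> mu K p \<longleftrightarrow> (\<forall>i\<in>K. t \<le> bc p i)"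
  unfolding mu_def by (simp add: Min_ge_iff)

lemma mu_le: "finite K \<Longrightarrow> i \<in> K \<Longrightarrow> mu K p \<le> bc p i"
  unfolding mu_def by simp

lemma mu_single: "mu {i} p = bc p i" unfolding mu_def by simp

lemma mu_concave:
  assumes K: "K \<subseteq> {0..n}" "K \<noteq> {}"
  shows "convex_on S (\<lambda>p. - mu K p)"
  unfolding convex_on_def
proof (intro conjI S_convex ballI allI impI)
  fix p q u v assume p: "p \<in> S" and q: "q \<in> S" and uv: "0 \<le> (u::real)" "0 \<le> (v::real)" "u + v = 1"
  have fK: "finite K" using K finite_subset by blast
  have "u * mu K p + v * mu K q \<le> mu K (u *\<^sub>R p + v *\<^sub>R q)"
  proof (subst mu_ge_iff[OF fK K(2)], intro ballI)
    fix i assume i: "i \<in> K"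
    have "u * mu K p + v * mu K q \<le> u * bc p i + v * bc q i"
      using mu_le[OF fK i] uv by (intro add_mono mult_left_mono) auto
    also have "\<dots> = bc (u *\<^sub>R p + v *\<^sub>R q) i" using bc_affine[OF p q uv] i K by auto
    finally show "u * mu K p + v * mu K q \<le> bc (u *\<^sub>R p + v *\<^sub>R q) i" .
  qed
  then show "- mu K (u *\<^sub>R p + v *\<^sub>R q) \<le> u * - mu K p + v * - mu K q" by simp
qed

lemma mu_integrable:
  assumes K: "K \<subseteq> {0..n}" "K \<noteq> {}"
  shows "set_integrable lebesgue S (mu K)"
proof -
  have "set_integrable lebesgue S (\<lambda>p. (-1) * (- mu K p))"
    by (intro set_integrable_mult_right convex_integrable mu_concave[OF K])
  then show ?thesis by simp
qed

lemma bc_integrable: "i \<in> {0..n} \<Longrightarrow> set_integrable lebesgue S (\<lambda>p. bc p i)"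
proof -
  assume "i \<in> {0..n}"
  then have "set_integrable lebesgue S (mu {i})" using mu_integrable[of "{i}"] by simp
  moreover have "mu {i} = (\<lambda>p. bc p i)" by (simp add: fun_eq_iff mu_single)
  ultimately show ?thesis by simp
qed

lemma level_set:
  assumes K: "K \<subseteq> {0..n}" "card K = s" "K \<noteq> {}" and t: "0 \<le> t" "s * t < 1"
  shows "{p \<in> S. t \<le> mu K p} = (\<lambda>p. (1 - s * t) *\<^sub>R p + t *\<^sub>R (\<Sum>i\<in>K. x i)) ` S"
proof -
  have fK: "finite K" using K finite_subset by blast
  let ?c = "1 - s * t"
  have c: "?c > 0" using t by simp
  have sK: "(\<Sum>i\<in>{0..n}. if i \<in> K then t else 0) = s * t" using sum_if_sub[OF K(1), of "\<lambda>_. t"] K by simp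
  have sKx: "(\<Sum>i\<in>{0..n}. (if i \<in> K then t else 0) *\<^sub>R x i) = t *\<^sub>R (\<Sum>i\<in>K. x i)"
  proof -
    have "(\<Sum>i\<in>{0..n}. (if i \<in> K then t else 0) *\<^sub>R x i) = (\<Sum>i\<in>{0..n}. if i \<in> K then t *\<^sub>R x i else 0)"
      by (intro sum.cong) auto
    also have "\<dots> = (\<Sum>i\<in>K. t *\<^sub>R x i)" by (rule sum_if_sub[OF K(1)])
    finally show ?thesis by (simp add: scaleR_sum_right)
  qed
  show ?thesis
  proof (intro equalityI subsetI)
    fix q assume "q \<in> {p \<in> S. t \<le> mu K p}"
    then have q: "q \<in> S" and qt: "\<forall>i\<in>K. t \<le> bc q i" using mu_ge_iff[OF fK K(3)] by auto
    define u where "u i = (bc q i - (if i \<in> K then t else 0)) / ?c" for i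
    have u0: "\<forall>i\<in>{0..n}. 0 \<le> u i" using bc(1)[OF q] qt c unfolding u_def by auto
    have "sum u {0..n} = (sum (bc q) {0..n} - (\<Sum>i\<in>{0..n}. if i \<in> K then t else 0)) / ?c"
      unfolding u_def by (simp add: sum_divide_distrib[symmetric] sum_subtractf)
    then have u1: "sum u {0..n} = 1" using bc(2)[OF q] sK c by simp
    define p where "p = (\<Sum>i\<in>{0..n}. u i *\<^sub>R x i)"
    have pS: "p \<in> S" unfolding S_iff p_def using u0 u1 by blast
    have "?c *\<^sub>R p = (\<Sum>i\<in>{0..n}. (bc q i - (if i \<in> K then t else 0)) *\<^sub>R x i)"
      unfolding p_def u_def scaleR_sum_right using c by (intro sum.cong) auto
    also have "\<dots> = q - t *\<^sub>R (\<Sum>i\<in>K. x i)"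
      using bc(3)[OF q] sKx by (simp add: scaleR_diff_left sum_subtractf)
    finally have "?c *\<^sub>R p + t *\<^sub>R (\<Sum>i\<in>K. x i) = q" by simp
    then show "q \<in> (\<lambda>p. ?c *\<^sub>R p + t *\<^sub>R (\<Sum>i\<in>K. x i)) ` S" using pS by blast
  next
    fix q assume "q \<in> (\<lambda>p. ?c *\<^sub>R p + t *\<^sub>R (\<Sum>i\<in>K. x i)) ` S"
    then obtain p where p: "p \<in> S" and qp: "q = ?c *\<^sub>R p + t *\<^sub>R (\<Sum>i\<in>K. x i)" by blast
    define v where "v i = ?c * bc p i + (if i \<in> K then t else 0)" for i
    have v0: "\<forall>i\<in>{0..n}. 0 \<le> v i" using bc(1)[OF p] c t unfolding v_def by auto
    have v1: "sum v {0..n} = 1" unfolding v_def using bc(2)[OF p] sK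
      by (simp add: sum.distrib sum_distrib_left[symmetric])
    have vx: "(\<Sum>i\<in>{0..n}. v i *\<^sub>R x i) = q"
    proof -
      have "(\<Sum>i\<in>{0..n}. v i *\<^sub>R x i) = ?c *\<^sub>R (\<Sum>i\<in>{0..n}. bc p i *\<^sub>R x i) + (\<Sum>i\<in>{0..n}. (if i \<in> K then t else 0) *\<^sub>R x i)"
        unfolding v_def by (simp add: scaleR_add_left sum.distrib scaleR_sum_right)
      then show ?thesis using bc(3)[OF p] sKx qp by simp
    qed
    have qS: "q \<in> S" unfolding S_iff using v0 v1 vx by blast
    have "\<forall>i\<in>K. t \<le> bc q i"
    proof
      fix i assume i: "i \<in> K"
      then have "bc q i = v i" using bc_eq[OF v0 v1 vx] K by auto
      then show "t \<le> bc q i" unfolding v_def using i bc(1)[OF p] c K by auto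
    qed
    then show "q \<in> {p \<in> S. t \<le> mu K p}" using qS mu_ge_iff[OF fK K(3)] by auto
  qed
qed

lemma level_meas:
  assumes K: "K \<subseteq> {0..n}" "card K = s" "K \<noteq> {}" and t: "0 \<le> t" "s * t < 1"
  shows "{p \<in> S. t \<le> mu K p} \<in> lmeasurable"
    and "measure lebesgue {p \<in> S. t \<le> mu K p} = (1 - s * t) ^ n * measure lebesgue S"
proof -
  have "compact ((\<lambda>p. (1 - s * t) *\<^sub>R p + t *\<^sub>R (\<Sum>i\<in>K. x i)) ` S)"
    by (intro compact_continuous_image S_compact continuous_intros)
  then show "{p \<in> S. t \<le> mu K p} \<in> lmeasurable"
    unfolding level_set[OF assms] by (rule lmeasurable_compact)
  show "measure lebesgue {p \<in> S. t \<le> mu K p} = (1 - s * t) ^ n * measure lebesgue S"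
    unfolding level_set[OF assms] measure_lebesgue_affine dim using t by simp
qed

lemma mu_nonneg: "p \<in> S \<Longrightarrow> K \<subseteq> {0..n} \<Longrightarrow> K \<noteq> {} \<Longrightarrow> 0 \<le> mu K p"
  using mu_ge_iff[of K 0 p] bc(1)[of p] finite_subset[of K "{0..n}"] by auto

lemma mu_le_inv:
  assumes p: "p \<in> S" and K: "K \<subseteq> {0..n}" "card K = s" "K \<noteq> {}"
  shows "s * mu K p \<le> 1"
proof -
  have fK: "finite K" using K finite_subset by blast
  have "s * mu K p = (\<Sum>i\<in>K. mu K p)" using K by simp
  also have "\<dots> \<le> (\<Sum>i\<in>K. bc p i)" using mu_le[OF fK] by (intro sum_mono) auto
  also have "\<dots> \<le> (\<Sum>i\<in>{0..n}. bc p i)" using K bc(1)[OF p] by (intro sum_mono2) auto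
  finally show ?thesis using bc(2)[OF p] by simp
qed

lemma mu_int:
  assumes K: "K \<subseteq> {0..n}" "card K = s" "K \<noteq> {}"
  shows "(LINT p:S|lebesgue. mu K p) = measure lebesgue S / (s * (n+1))"
proof -
  have fK: "finite K" using K finite_subset by blast
  have s0: "real s > 0" using K(2,3) fK card_gt_0_iff of_nat_0_less_iff by metis
  define V where "V = measure lebesgue S"
  have V0: "V \<ge> 0" unfolding V_def by simp
  define J where "J = (LINT p:S|lebesgue. mu K p)"
  have Jdef: "J = integral\<^sup>L lebesgue (\<lambda>p. indicator S p * mu K p)"
    unfolding J_def set_lebesgue_integral_def by simp
  have intJ: "integrable lebesgue (\<lambda>p. indicator S p * mu K p)"
    using mu_integrable[OF K(1,3)] unfolding set_integrable_def by simp
  have Sset: "S \<in> sets lebesgue" "emeasure lebesgue S < \<infinity>"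
    using S_lmeas fmeasurableD2[OF S_lmeas] by (auto simp: less_top)
  have bound: "\<bar>J - V / (s * (n+1))\<bar> \<le> (V / s) / real M" if M: "(1::nat) \<le> M" for M
  proof -
    have M0: "real M > 0" using M by simp
    define A where "A j = {p \<in> S. real j / (s * M) \<le> mu K p}" for j :: nat
    have Am: "A j \<in> lmeasurable \<and> measure lebesgue (A j) = (1 - real j / M) ^ n * V"
      if j: "j \<in> {1..<M}" for j
    proof -
      have e: "real s * (real j / (s * M)) = real j / M" using s0 by simp
      have lt: "real s * (real j / (s * M)) < 1" unfolding e using j M0 by simp
      show ?thesis
        using level_meas[OF K _ lt] s0 unfolding A_def V_def e by simp
    qed
    have Am2: "A j \<in> sets lebesgue" "emeasure lebesgue (A j) < \<infinity>" if "j \<in> {1..<M}" for j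
    proof -
      have l: "A j \<in> lmeasurable" using Am[OF that] by (rule conjunct1)
      show "A j \<in> sets lebesgue" using l by (rule fmeasurableD)
      show "emeasure lebesgue (A j) < \<infinity>" using l unfolding fmeasurable_def by blast
    qed
    have intI: "integrable lebesgue (\<lambda>p. (1 / (s * M)) * indicator (A j) p)" if "j \<in> {1..<M}" for j
      by (intro integrable_mult_right integrable_real_indicator Am2[OF that])
    define L where "L p = (\<Sum>j\<in>{1..<M}. (1 / (s * M)) * indicator (A j) p)" for p
    have intL: "integrable lebesgue L"
      unfolding L_def using intI by (intro Bochner_Integration.integrable_sum) auto
    have IL: "integral\<^sup>L lebesgue L = (\<Sum>j\<in>{1..<M}. (1 / (s * M)) * ((1 - real j / M) ^ n * V))"
      unfolding L_def
    proof (subst Bochner_Integration.integral_sum)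
      show "\<And>j. j \<in> {1..<M} \<Longrightarrow> integrable lebesgue (\<lambda>p. (1 / (s * M)) * indicator (A j) p)" by (rule intI)
      show "(\<Sum>j\<in>{1..<M}. LINT p|lebesgue. 1 / (s * M) * indicator (A j) p) = (\<Sum>j\<in>{1..<M}. (1 / (s * M)) * ((1 - real j / M) ^ n * V))"
        using Am by (intro sum.cong refl) simp
    qed
    have ind: "indicator (A j) p = (if p \<in> S \<and> real j \<le> s * M * mu K p then 1 else (0::real))" for j p
    proof -
      have "real j / (s * M) \<le> mu K p \<longleftrightarrow> real j \<le> s * M * mu K p"
        using s0 M0 by (simp add: divide_le_eq mult.commute)
      then show ?thesis unfolding A_def indicator_def by auto
    qed
    have Lp: "L p = (if p \<in> S then (1 / (s * M)) * cnt M (s * M * mu K p) else 0)" for p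
      unfolding L_def ind cnt_def by (auto simp: sum_distrib_left intro!: sum.cong)
    have low: "L p \<le> indicator S p * mu K p" for p
    proof (cases "p \<in> S")
      case True
      have "cnt M (s * M * mu K p) \<le> s * M * mu K p"
        using mu_nonneg[OF True K(1,3)] s0 M0 by (intro cnt_le) simp
      then have "(1 / (s * M)) * cnt M (s * M * mu K p) \<le> (1 / (s * M)) * (s * M * mu K p)"
        using s0 M0 by (intro mult_left_mono) auto
      then show ?thesis using True s0 M0 by (simp add: Lp)
    qed (simp add: Lp)
    have up: "indicator S p * mu K p \<le> (1 / (s * M)) * indicator S p + L p" for p
    proof (cases "p \<in> S")
      case True
      have "s * M * mu K p \<le> real M"
        using mu_le_inv[OF True K] M0 by (simp add: mult.commute mult.left_commute)
      then have "s * M * mu K p \<le> 1 + cnt M (s * M * mu K p)"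
        using mu_nonneg[OF True K(1,3)] s0 M0 by (intro cnt_ge) auto
      then have "(1 / (s * M)) * (s * M * mu K p) \<le> (1 / (s * M)) * (1 + cnt M (s * M * mu K p))"
        using s0 M0 by (intro mult_left_mono) auto
      then show ?thesis using True s0 M0 by (simp add: Lp distrib_left)
    qed (simp add: Lp)
    have intU: "integrable lebesgue (\<lambda>p. (1 / (s * M)) * indicator S p + L p)"
      using intL Sset by (intro Bochner_Integration.integrable_add integrable_mult_right integrable_real_indicator) auto
    have J1: "integral\<^sup>L lebesgue L \<le> J"
      unfolding Jdef by (rule integral_mono[OF intL intJ low])
    have "J \<le> integral\<^sup>L lebesgue (\<lambda>p. (1 / (s * M)) * indicator S p + L p)"
      unfolding Jdef by (rule integral_mono[OF intJ intU up])
    also have "\<dots> = (1 / (s * M)) * V + integral\<^sup>L lebesgue L"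
      using intL Sset unfolding V_def
      by (subst Bochner_Integration.integral_add) (auto intro!: integrable_mult_right integrable_real_indicator)
    finally have J2: "J \<le> (1 / (s * M)) * V + integral\<^sup>L lebesgue L" .
    define P where "P = (\<Sum>i<M. real i ^ n)"
    have Prev: "(\<Sum>j\<in>{1..<M}. real (M - j) ^ n) = P"
    proof -
      have "(\<Sum>j\<in>{1..<M}. real (M - j) ^ n) = (\<Sum>i\<in>{1..<M}. real i ^ n)"
        using sum.atLeastLessThan_rev[of "\<lambda>i. real i ^ n" 1 M] by simp
      also have "\<dots> = (\<Sum>i\<in>{0..<M}. real i ^ n)"
        using sum.atLeast_Suc_lessThan[of 0 M "\<lambda>i. real i ^ n"] M n_pos by simp
      finally show ?thesis unfolding P_def by (simp add: atLeast0LessThan)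
    qed
    have "integral\<^sup>L lebesgue L = (V / s) * ((\<Sum>j\<in>{1..<M}. real (M - j) ^ n) / real M ^ (n+1))"
    proof -
      have "(1 - real j / M) ^ n = real (M - j) ^ n / real M ^ n" if "j \<in> {1..<M}" for j
      proof -
        have "1 - real j / M = real (M - j) / M" using that M0 by (simp add: field_simps of_nat_diff)
        then show ?thesis by (simp add: power_divide)
      qed
      then have "integral\<^sup>L lebesgue L = (\<Sum>j\<in>{1..<M}. (1 / (s * M)) * (real (M - j) ^ n / real M ^ n * V))"
        unfolding IL by (intro sum.cong) auto
      also have "\<dots> = (V / s) * ((\<Sum>j\<in>{1..<M}. real (M - j) ^ n) / real M ^ (n+1))"
        using s0 M0 by (simp add: sum_distrib_left sum_divide_distrib field_simps)
      finally show ?thesis .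
    qed
    then have IL2: "integral\<^sup>L lebesgue L = (V / s) * (P / real M ^ (n+1))" using Prev by simp
    have r1: "P / real M ^ (n+1) \<le> 1 / real (n+1)"
      using psum[of n M] M0 unfolding P_def by (simp add: field_simps)
    have r2: "1 / real (n+1) - 1 / real M \<le> P / real M ^ (n+1)"
    proof -
      have "real M ^ (n+1) \<le> real (n+1) * (P + real M ^ n)" using psum[of n M] unfolding P_def by simp
      then have "1 / real (n+1) \<le> (P + real M ^ n) / real M ^ (n+1)"
        using M0 by (simp add: field_simps)
      also have "\<dots> = P / real M ^ (n+1) + 1 / real M" using M0 by (simp add: add_divide_distrib)
      finally show ?thesis by simp
    qed
    have Vs: "V / s \<ge> 0" using V0 s0 by simp
    have a1: "(V / s) * (1 / real (n+1) - 1 / real M) \<le> J"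
      using J1 IL2 mult_left_mono[OF r2 Vs] by simp
    have a2: "J \<le> (V / s) * (1 / real M) + (V / s) * (1 / real (n+1))"
      using J2 IL2 mult_left_mono[OF r1 Vs] s0 by simp
    have e: "V / (s * (n+1)) = (V / s) * (1 / real (n+1))" by (simp add: ring_distribs)
    show ?thesis unfolding e using a1 a2 by (simp add: right_diff_distrib abs_le_iff)
  qed
  have "J - V / (s * (n+1)) = 0"
    by (rule zero_by_eps[of "V / s"]) (use V0 s0 bound in auto)
  then show ?thesis unfolding J_def V_def by simp
qed

definition "KK k = {K. K \<subseteq> {0..n} \<and> card K = k}"

lemma KK_fin: "finite (KK k)" unfolding KK_def by (rule finite_subset[of _ "Pow {0..n}"]) auto

lemma KK_card: "card (KK k) = (n+1) choose k" unfolding KK_def using n_subsets[of "{0..n}" k] by simp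

lemma KKi_card:
  assumes i: "i \<in> {0..n}" and k: "1 \<le> k"
  shows "card {K \<in> KK k. i \<in> K} = n choose (k - 1)"
proof -
  have "bij_betw (\<lambda>K. K - {i}) {K \<in> KK k. i \<in> K} {T. T \<subseteq> {0..n} - {i} \<and> card T = k - 1}"
  proof (rule bij_betw_byWitness[where f'="insert i"])
    show "\<forall>a\<in>{K \<in> KK k. i \<in> K}. insert i (a - {i}) = a" by auto
    show "\<forall>a'\<in>{T. T \<subseteq> {0..n} - {i} \<and> card T = k - 1}. insert i a' - {i} = a'" by auto
    show "(\<lambda>K. K - {i}) ` {K \<in> KK k. i \<in> K} \<subseteq> {T. T \<subseteq> {0..n} - {i} \<and> card T = k - 1}"
    proof
      fix T assume "T \<in> (\<lambda>K. K - {i}) ` {K \<in> KK k. i \<in> K}"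
      then obtain K where K: "K \<subseteq> {0..n}" "card K = k" "i \<in> K" "T = K - {i}" unfolding KK_def by auto
      have "finite K" using K(1) finite_subset by blast
      then show "T \<in> {T. T \<subseteq> {0..n} - {i} \<and> card T = k - 1}" using K by auto
    qed
    show "insert i ` {T. T \<subseteq> {0..n} - {i} \<and> card T = k - 1} \<subseteq> {K \<in> KK k. i \<in> K}"
    proof
      fix K assume "K \<in> insert i ` {T. T \<subseteq> {0..n} - {i} \<and> card T = k - 1}"
      then obtain T where T: "T \<subseteq> {0..n} - {i}" "card T = k - 1" "K = insert i T" by auto
      have "finite T" using T(1) finite_subset by blast
      moreover have "i \<notin> T" using T(1) by blast
      ultimately have "card K = k" using T k by (simp add: card_insert_if)
      then show "K \<in> {K \<in> KK k. i \<in> K}" using T i unfolding KK_def by auto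
    qed
  qed
  then have "card {K \<in> KK k. i \<in> K} = card {T. T \<subseteq> {0..n} - {i} \<and> card T = k - 1}"
    by (rule bij_betw_same_card)
  also have "\<dots> = card ({0..n} - {i}) choose (k - 1)" by (rule n_subsets) simp
  also have "\<dots> = n choose (k - 1)" using i by simp
  finally show ?thesis .
qed

lemma bary_S: "K \<in> KK k \<Longrightarrow> 1 \<le> k \<Longrightarrow> bary x K \<in> S"
proof -
  assume K: "K \<in> KK k" and k: "1 \<le> k"
  then have Ks: "K \<subseteq> {0..n}" "card K = k" unfolding KK_def by auto
  define u where "u i = (if i \<in> K then 1 / real k else 0)" for i
  have "(\<Sum>i\<in>{0..n}. u i *\<^sub>R x i) = (\<Sum>i\<in>{0..n}. if i \<in> K then (1 / real k) *\<^sub>R x i else 0)"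
    unfolding u_def by (intro sum.cong) auto
  also have "\<dots> = (\<Sum>i\<in>K. (1 / real k) *\<^sub>R x i)" by (rule sum_if_sub[OF Ks(1)])
  also have "\<dots> = bary x K" unfolding bary_def Ks(2) by (simp add: scaleR_sum_right)
  finally have e: "(\<Sum>i\<in>{0..n}. u i *\<^sub>R x i) = bary x K" .
  have "sum u {0..n} = (\<Sum>i\<in>K. 1 / real k)" unfolding u_def by (rule sum_if_sub[OF Ks(1)])
  also have "\<dots> = 1" using Ks k by simp
  finally have "sum u {0..n} = 1" .
  then show ?thesis unfolding S_iff using e by (intro exI[of _ u]) (auto simp: u_def)
qed

lemma pointwise:
  assumes f: "convex_on S f" and k: "1 \<le> k" "k \<le> n + 1" and p: "p \<in> S"
  defines "Cn \<equiv> real (n choose (k - 1))"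
  shows "f p \<le> (\<Sum>K\<in>KK k. (real k * mu K p / Cn) * f (bary x K))
            + (\<Sum>i\<in>{0..n}. (bc p i - (1 / Cn) * (\<Sum>K\<in>{K \<in> KK k. i \<in> K}. mu K p)) * f (x i))"
proof -
  have Cn0: "Cn > 0" unfolding Cn_def using k by simp
  have KKs: "K \<subseteq> {0..n}" "card K = k" "K \<noteq> {}" "finite K" if "K \<in> KK k" for K
    using that k unfolding KK_def by (auto intro: finite_subset)
  define a where "a = case_sum (\<lambda>K. real k * mu K p / Cn) (\<lambda>i. bc p i - (1 / Cn) * (\<Sum>K\<in>{K \<in> KK k. i \<in> K}. mu K p))"
  define y where "y = case_sum (\<lambda>K. bary x K) x"
  let ?I = "KK k <+> {0..n}"
  have finI: "finite ?I" using KK_fin by simp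
  have sw: "(\<Sum>K\<in>KK k. \<Sum>i\<in>K. g K i) = (\<Sum>i\<in>{0..n}. \<Sum>K\<in>{K \<in> KK k. i \<in> K}. g K i)" for g :: "nat set \<Rightarrow> nat \<Rightarrow> 'b::comm_monoid_add"
    by (rule swap_sum[OF KK_fin]) (auto simp: KK_def)
  have summu: "(\<Sum>i\<in>K. mu K p) = real k * mu K p" if "K \<in> KK k" for K
    using KKs[OF that] by simp
  have "sum a ?I = (\<Sum>K\<in>KK k. real k * mu K p / Cn) + (\<Sum>i\<in>{0..n}. bc p i - (1 / Cn) * (\<Sum>K\<in>{K \<in> KK k. i \<in> K}. mu K p))"
    unfolding a_def by (simp add: sum.Plus[OF KK_fin] o_def)
  also have "\<dots> = (\<Sum>K\<in>KK k. real k * mu K p / Cn) + 1 - (1 / Cn) * (\<Sum>i\<in>{0..n}. \<Sum>K\<in>{K \<in> KK k. i \<in> K}. mu K p)"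
    using bc(2)[OF p] by (simp add: sum_subtractf sum_distrib_left)
  also have "(\<Sum>i\<in>{0..n}. \<Sum>K\<in>{K \<in> KK k. i \<in> K}. mu K p) = (\<Sum>K\<in>KK k. real k * mu K p)"
  proof -
    have "(\<Sum>K\<in>KK k. \<Sum>i\<in>K. mu K p) = (\<Sum>K\<in>KK k. real k * mu K p)"
      by (rule sum.cong[OF refl]) (rule summu)
    then show ?thesis using sw[of "\<lambda>K i. mu K p"] by simp
  qed
  finally have a1: "sum a ?I = 1" by (simp add: sum_divide_distrib[symmetric] sum_distrib_left)
  have a0: "0 \<le> a j" if "j \<in> ?I" for j
  proof (cases j)
    case (Inl K)
    then have "K \<in> KK k" using that by auto
    then show ?thesis using Inl mu_nonneg[OF p] KKs Cn0 unfolding a_def by auto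
  next
    case (Inr i)
    then have i: "i \<in> {0..n}" using that by auto
    have "(\<Sum>K\<in>{K \<in> KK k. i \<in> K}. mu K p) \<le> (\<Sum>K\<in>{K \<in> KK k. i \<in> K}. bc p i)"
      using mu_le KKs by (intro sum_mono) auto
    also have "\<dots> = Cn * bc p i" using KKi_card[OF i k(1)] unfolding Cn_def by simp
    finally have "(1 / Cn) * (\<Sum>K\<in>{K \<in> KK k. i \<in> K}. mu K p) \<le> bc p i"
      using Cn0 by (simp add: field_simps)
    then show ?thesis using Inr unfolding a_def by simp
  qed
  have yS: "y j \<in> S" if "j \<in> ?I" for j
    using that bary_S[OF _ k(1)] x_in_S unfolding y_def by auto
  have comb: "(\<Sum>j\<in>?I. a j *\<^sub>R y j) = p"
  proof -
    have t1: "(real k * mu K p / Cn) *\<^sub>R bary x K = (\<Sum>i\<in>K. (mu K p / Cn) *\<^sub>R x i)" if "K \<in> KK k" for K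
      using KKs[OF that] k unfolding bary_def by (simp add: scaleR_sum_right)
    have "(\<Sum>K\<in>KK k. (real k * mu K p / Cn) *\<^sub>R bary x K) = (\<Sum>K\<in>KK k. \<Sum>i\<in>K. (mu K p / Cn) *\<^sub>R x i)"
      using t1 by (rule sum.cong[OF refl])
    also have "\<dots> = (\<Sum>i\<in>{0..n}. \<Sum>K\<in>{K \<in> KK k. i \<in> K}. (mu K p / Cn) *\<^sub>R x i)" by (rule sw)
    also have "\<dots> = (\<Sum>i\<in>{0..n}. ((1 / Cn) * (\<Sum>K\<in>{K \<in> KK k. i \<in> K}. mu K p)) *\<^sub>R x i)"
      by (simp add: scaleR_sum_left sum_distrib_left)
    finally have e1: "(\<Sum>K\<in>KK k. (real k * mu K p / Cn) *\<^sub>R bary x K) = \<dots>" .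
    have "(\<Sum>j\<in>?I. a j *\<^sub>R y j) = (\<Sum>K\<in>KK k. (real k * mu K p / Cn) *\<^sub>R bary x K)
        + (\<Sum>i\<in>{0..n}. (bc p i - (1 / Cn) * (\<Sum>K\<in>{K \<in> KK k. i \<in> K}. mu K p)) *\<^sub>R x i)"
      unfolding a_def y_def by (simp add: sum.Plus[OF KK_fin] o_def)
    also have "\<dots> = (\<Sum>i\<in>{0..n}. bc p i *\<^sub>R x i)"
      unfolding e1 by (simp add: scaleR_diff_left sum_subtractf)
    finally show ?thesis using bc(3)[OF p] by simp
  qed
  have "f p = f (\<Sum>j\<in>?I. a j *\<^sub>R y j)" using comb by simp
  also have "\<dots> \<le> (\<Sum>j\<in>?I. a j * f (y j))"
    by (rule convex_on_sum[OF finI _ f a1 a0 yS]) auto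
  also have "\<dots> = (\<Sum>K\<in>KK k. (real k * mu K p / Cn) * f (bary x K))
            + (\<Sum>i\<in>{0..n}. (bc p i - (1 / Cn) * (\<Sum>K\<in>{K \<in> KK k. i \<in> K}. mu K p)) * f (x i))"
    unfolding a_def y_def by (simp add: sum.Plus[OF KK_fin] o_def)
  finally show ?thesis .
qed

lemma binom_id: "1 \<le> k \<Longrightarrow> real (n choose (k - 1)) * real (n + 1) = real k * real ((n + 1) choose k)"
proof -
  assume k: "1 \<le> k"
  have "Suc n * (n choose (k - 1)) = (Suc n choose Suc (k - 1)) * Suc (k - 1)" by (rule Suc_times_binomial_eq)
  then have "(n + 1) * (n choose (k - 1)) = ((n + 1) choose k) * k" using k by simp
  then have "real ((n + 1) * (n choose (k - 1))) = real (((n + 1) choose k) * k)" by simp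
  then show ?thesis by (simp add: algebra_simps)
qed

lemma avg_bound:
  assumes f: "convex_on S f" and k: "1 \<le> k" "k \<le> n + 1"
  shows "Avg f S \<le> (1 / real k) * ((1 / real ((n + 1) choose k)) * (\<Sum>K\<in>KK k. f (bary x K)))
                  + (1 - 1 / real k) * ((\<Sum>i\<in>{0..n}. f (x i)) / real (n + 1))"
proof -
  define Cn where "Cn = real (n choose (k - 1))"
  define Ck where "Ck = real ((n + 1) choose k)"
  have Cn0: "Cn > 0" unfolding Cn_def using k by simp
  have Ck0: "Ck > 0" unfolding Ck_def using k by simp
  have CC: "Cn * real (n + 1) = real k * Ck" unfolding Cn_def Ck_def by (rule binom_id[OF k(1)])
  define V where "V = measure lebesgue S"
  have V0: "V > 0" unfolding V_def by (rule V_pos)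
  define J where "J = V / (real k * (n + 1))"
  have KKs: "K \<subseteq> {0..n}" "card K = k" "K \<noteq> {}" if "K \<in> KK k" for K
    using that k unfolding KK_def by auto
  have muJ: "(LINT p:S|lebesgue. mu K p) = J" if "K \<in> KK k" for K
    using mu_int[OF KKs[OF that]] unfolding J_def V_def by (simp add: ring_distribs)
  have bcJ: "(LINT p:S|lebesgue. bc p i) = V / real (n + 1)" if "i \<in> {0..n}" for i
    using mu_int[of "{i}" 1] that unfolding V_def by (simp add: mu_single)
  have imu: "set_integrable lebesgue S (\<lambda>p. c * mu K p)" if "K \<in> KK k" for K c
    by (intro set_integrable_mult_right mu_integrable KKs[OF that])
  have ibc: "set_integrable lebesgue S (\<lambda>p. c * bc p i)" if "i \<in> {0..n}" for i c
    by (intro set_integrable_mult_right bc_integrable that)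
  define SB where "SB = (\<Sum>K\<in>KK k. f (bary x K))"
  define SX where "SX = (\<Sum>i\<in>{0..n}. f (x i))"
  define G1 where "G1 p = (\<Sum>K\<in>KK k. (real k * f (bary x K) / Cn) * mu K p)" for p
  define G2 where "G2 p = (\<Sum>i\<in>{0..n}. f (x i) * bc p i)" for p
  define G3 where "G3 p = (\<Sum>i\<in>{0..n}. \<Sum>K\<in>{K \<in> KK k. i \<in> K}. (f (x i) / Cn) * mu K p)" for p
  have pw: "f p \<le> G1 p + G2 p - G3 p" if p: "p \<in> S" for p
  proof -
    have e1: "(\<Sum>K\<in>KK k. (real k * mu K p / Cn) * f (bary x K)) = G1 p"
      unfolding G1_def by (intro sum.cong refl) simp
    have e2: "(\<Sum>i\<in>{0..n}. (bc p i - (1 / Cn) * (\<Sum>K\<in>{K \<in> KK k. i \<in> K}. mu K p)) * f (x i)) = G2 p - G3 p"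
    proof -
      have t: "(bc p i - (1 / Cn) * (\<Sum>K\<in>{K \<in> KK k. i \<in> K}. mu K p)) * f (x i)
          = f (x i) * bc p i - (\<Sum>K\<in>{K \<in> KK k. i \<in> K}. (f (x i) / Cn) * mu K p)" for i
      proof -
        have "(\<Sum>K\<in>{K \<in> KK k. i \<in> K}. (f (x i) / Cn) * mu K p) = (f (x i) / Cn) * (\<Sum>K\<in>{K \<in> KK k. i \<in> K}. mu K p)"
          by (simp add: sum_distrib_left)
        then show ?thesis by (simp add: algebra_simps)
      qed
      show ?thesis unfolding G2_def G3_def t by (rule sum_subtractf)
    qed
    show ?thesis using pointwise[OF f k p] unfolding Cn_def[symmetric] e1 e2 by simp
  qed
  have iG1: "set_integrable lebesgue S G1 \<and> (LINT p:S|lebesgue. G1 p) = (\<Sum>K\<in>KK k. (real k * f (bary x K) / Cn) * J)"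
  proof -
    have "set_integrable lebesgue S G1 \<and> (LINT p:S|lebesgue. G1 p) = (\<Sum>K\<in>KK k. (LINT p:S|lebesgue. (real k * f (bary x K) / Cn) * mu K p))"
      unfolding G1_def by (rule set_integral_sum_real[OF KK_fin imu])
    moreover have "(\<Sum>K\<in>KK k. (LINT p:S|lebesgue. (real k * f (bary x K) / Cn) * mu K p)) = (\<Sum>K\<in>KK k. (real k * f (bary x K) / Cn) * J)"
      by (rule sum.cong[OF refl]) (simp only: set_integral_mult_right muJ)
    ultimately show ?thesis by (simp only:)
  qed
  have iG2: "set_integrable lebesgue S G2 \<and> (LINT p:S|lebesgue. G2 p) = (\<Sum>i\<in>{0..n}. f (x i) * (V / real (n + 1)))"
  proof -
    have "set_integrable lebesgue S G2 \<and> (LINT p:S|lebesgue. G2 p) = (\<Sum>i\<in>{0..n}. (LINT p:S|lebesgue. f (x i) * bc p i))"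
      unfolding G2_def by (rule set_integral_sum_real[OF _ ibc]) auto
    moreover have "(\<Sum>i\<in>{0..n}. (LINT p:S|lebesgue. f (x i) * bc p i)) = (\<Sum>i\<in>{0..n}. f (x i) * (V / real (n + 1)))"
      by (rule sum.cong[OF refl]) (simp only: set_integral_mult_right bcJ)
    ultimately show ?thesis by (simp only:)
  qed
  have iG3: "set_integrable lebesgue S G3 \<and> (LINT p:S|lebesgue. G3 p) = (\<Sum>i\<in>{0..n}. f (x i) * J)"
  proof -
    have inner: "set_integrable lebesgue S (\<lambda>p. \<Sum>K\<in>{K \<in> KK k. i \<in> K}. (f (x i) / Cn) * mu K p) \<and>
       (LINT p:S|lebesgue. (\<Sum>K\<in>{K \<in> KK k. i \<in> K}. (f (x i) / Cn) * mu K p)) = f (x i) * J"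
      if i: "i \<in> {0..n}" for i
    proof -
      have "set_integrable lebesgue S (\<lambda>p. \<Sum>K\<in>{K \<in> KK k. i \<in> K}. (f (x i) / Cn) * mu K p) \<and>
       (LINT p:S|lebesgue. (\<Sum>K\<in>{K \<in> KK k. i \<in> K}. (f (x i) / Cn) * mu K p)) =
        (\<Sum>K\<in>{K \<in> KK k. i \<in> K}. (LINT p:S|lebesgue. (f (x i) / Cn) * mu K p))"
        by (rule set_integral_sum_real) (use KK_fin imu in auto)
      moreover have "(\<Sum>K\<in>{K \<in> KK k. i \<in> K}. (LINT p:S|lebesgue. (f (x i) / Cn) * mu K p)) =
          (\<Sum>K\<in>{K \<in> KK k. i \<in> K}. (f (x i) / Cn) * J)"
        by (rule sum.cong[OF refl]) (simp only: set_integral_mult_right muJ mem_Collect_eq)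
      moreover have "(\<Sum>K\<in>{K \<in> KK k. i \<in> K}. (f (x i) / Cn) * J) = f (x i) * J"
        using KKi_card[OF i k(1)] Cn0 unfolding Cn_def by simp
      ultimately show ?thesis by simp
    qed
    have "set_integrable lebesgue S G3 \<and> (LINT p:S|lebesgue. G3 p) =
        (\<Sum>i\<in>{0..n}. (LINT p:S|lebesgue. (\<Sum>K\<in>{K \<in> KK k. i \<in> K}. (f (x i) / Cn) * mu K p)))"
      unfolding G3_def by (rule set_integral_sum_real) (use inner in auto)
    then show ?thesis using inner by simp
  qed
  have iG: "set_integrable lebesgue S (\<lambda>p. G1 p + G2 p - G3 p)"
    using iG1 iG2 iG3 by (intro set_integral_diff(1) set_integral_add(1)) auto
  have intG: "(LINT p:S|lebesgue. G1 p + G2 p - G3 p) =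
      (real k * J / Cn) * SB + (V / real (n + 1)) * SX - J * SX"
  proof -
    have "(LINT p:S|lebesgue. G1 p + G2 p - G3 p) = (LINT p:S|lebesgue. G1 p + G2 p) - (LINT p:S|lebesgue. G3 p)"
      using iG1 iG2 iG3 by (intro set_integral_diff(2) set_integral_add(1)) auto
    also have "\<dots> = (LINT p:S|lebesgue. G1 p) + (LINT p:S|lebesgue. G2 p) - (LINT p:S|lebesgue. G3 p)"
      using iG1 iG2 by (simp add: set_integral_add(2))
    also have "\<dots> = (real k * J / Cn) * SB + (V / real (n + 1)) * SX - J * SX"
    proof -
      have a: "(\<Sum>K\<in>KK k. (real k * f (bary x K) / Cn) * J) = (real k * J / Cn) * SB"
        unfolding SB_def sum_distrib_left by (rule sum.cong[OF refl]) simp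
      have b: "(\<Sum>i\<in>{0..n}. f (x i) * (V / real (n + 1))) = (V / real (n + 1)) * SX"
        unfolding SX_def sum_distrib_left by (rule sum.cong[OF refl]) simp
      have c: "(\<Sum>i\<in>{0..n}. f (x i) * J) = J * SX"
        unfolding SX_def sum_distrib_left by (rule sum.cong[OF refl]) simp
      show ?thesis using iG1 iG2 iG3 a b c by (simp only:)
    qed
    finally show ?thesis .
  qed
  have fint: "set_integrable lebesgue S f" by (rule convex_integrable[OF f])
  have le: "(LINT p:S|lebesgue. f p) \<le> (LINT p:S|lebesgue. G1 p + G2 p - G3 p)"
    by (rule set_integral_mono[OF fint iG pw])
  have c1: "real k * J / Cn = V * ((1 / real k) * (1 / Ck))"
  proof -
    have kz: "real k \<noteq> 0" using k by simp
    have kJ: "real k * J = V / real (n + 1)" unfolding J_def using kz by simp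
    have "real k * J / Cn = V / (Cn * real (n + 1))" unfolding kJ by (simp add: mult.commute)
    also have "\<dots> = V / (real k * Ck)" unfolding CC ..
    finally show ?thesis by simp
  qed
  have c2: "(V / real (n + 1)) * SX - J * SX = V * ((1 - 1 / real k) * (SX / real (n + 1)))"
    unfolding J_def using k by (intro aux2) auto
  have "(LINT p:S|lebesgue. G1 p + G2 p - G3 p) = V * ((1 / real k) * ((1 / Ck) * SB) + (1 - 1 / real k) * (SX / real (n + 1)))"
    unfolding intG using c1 c2 by (simp add: distrib_left)
  then have "(LINT p:S|lebesgue. f p) \<le> V * ((1 / real k) * ((1 / Ck) * SB) + (1 - 1 / real k) * (SX / real (n + 1)))"
    using le by simp
  then have "Avg f S \<le> (1 / real k) * ((1 / Ck) * SB) + (1 - 1 / real k) * (SX / real (n + 1))"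
    unfolding Avg_def V_def[symmetric] using V0 by (simp add: divide_le_eq mult.commute)
  then show ?thesis unfolding Ck_def SB_def SX_def .
qed

lemma bary_le:
  assumes f: "convex_on S f" and k: "1 \<le> k" "k \<le> n + 1"
  shows "(1 / real ((n + 1) choose k)) * (\<Sum>K\<in>KK k. f (bary x K)) \<le> (\<Sum>i\<in>{0..n}. f (x i)) / real (n + 1)"
proof -
  define Cn where "Cn = real (n choose (k - 1))"
  define Ck where "Ck = real ((n + 1) choose k)"
  have Ck0: "Ck > 0" unfolding Ck_def using k by simp
  have CC: "Cn * real (n + 1) = real k * Ck" unfolding Cn_def Ck_def by (rule binom_id[OF k(1)])
  have KKs: "K \<subseteq> {0..n}" "card K = k" "K \<noteq> {}" "finite K" if "K \<in> KK k" for K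
    using that k unfolding KK_def by (auto intro: finite_subset)
  have one: "f (bary x K) \<le> (\<Sum>i\<in>K. (1 / real k) * f (x i))" if K: "K \<in> KK k" for K
  proof -
    have "bary x K = (\<Sum>i\<in>K. (1 / real k) *\<^sub>R x i)" unfolding bary_def KKs(2)[OF K] by (simp add: scaleR_sum_right)
    moreover have "f (\<Sum>i\<in>K. (1 / real k) *\<^sub>R x i) \<le> (\<Sum>i\<in>K. (1 / real k) * f (x i))"
      using KKs[OF K] x_in_S k by (intro convex_on_sum[OF _ _ f]) auto
    ultimately show ?thesis by simp
  qed
  have "(\<Sum>K\<in>KK k. f (bary x K)) \<le> (\<Sum>K\<in>KK k. \<Sum>i\<in>K. (1 / real k) * f (x i))"
    by (intro sum_mono one)
  also have "\<dots> = (\<Sum>i\<in>{0..n}. \<Sum>K\<in>{K \<in> KK k. i \<in> K}. (1 / real k) * f (x i))"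
    by (rule swap_sum[OF KK_fin]) (auto simp: KK_def)
  also have "\<dots> = (\<Sum>i\<in>{0..n}. Cn * ((1 / real k) * f (x i)))"
    using KKi_card k unfolding Cn_def by (intro sum.cong refl) simp
  also have "\<dots> = (Cn / real k) * (\<Sum>i\<in>{0..n}. f (x i))" by (simp add: sum_distrib_left)
  finally have le: "(\<Sum>K\<in>KK k. f (bary x K)) \<le> (Cn / real k) * (\<Sum>i\<in>{0..n}. f (x i))" .
  have "(1 / Ck) * (\<Sum>K\<in>KK k. f (bary x K)) \<le> (1 / Ck) * ((Cn / real k) * (\<Sum>i\<in>{0..n}. f (x i)))"
    using le Ck0 by (intro mult_left_mono) auto
  also have "\<dots> = (\<Sum>i\<in>{0..n}. f (x i)) / real (n + 1)"
  proof -
    have "real (n+1) > 0" "real k > 0" using k by auto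
    then have eq: "(1 / Ck) * (Cn / real k) = 1 / real (n + 1)" using CC Ck0 by (simp add: field_simps)
    have "(1 / Ck) * ((Cn / real k) * (\<Sum>i\<in>{0..n}. f (x i))) = ((1 / Ck) * (Cn / real k)) * (\<Sum>i\<in>{0..n}. f (x i))"
      by (simp only: mult.assoc)
    also have "\<dots> = (\<Sum>i\<in>{0..n}. f (x i)) / real (n + 1)" unfolding eq by simp
    finally show ?thesis .
  qed
  finally show ?thesis unfolding Ck_def .
qed

end

lemma aux3: "(N1::real) > 0 \<Longrightarrow> kk > 0 \<Longrightarrow> a * kk \<le> N1 \<Longrightarrow> a / N1 \<le> 1 / kk"
  by (simp add: field_simps)

theorem corollary10:
  fixes x :: "nat \<Rightarrow> 'a::euclidean_space"
    and f :: "'a \<Rightarrow> real"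
    and n k :: nat
  assumes dim: "DIM('a) = n"
    and inj: "inj_on x {0..n}"
    and indep: "\<not> affine_dependent (x ` {0..n})"
    and conv: "convex_on (convex hull (x ` {0..n})) f"
    and k: "1 \<le> k" "k \<le> n + 1"
  shows "Avg f (convex hull (x ` {0..n}))
    \<le> (real ((n + 1) div k) / real (n + 1)) *
         ((1 / real ((n + 1) choose k)) *
           (\<Sum>K | K \<subseteq> {0..n} \<and> card K = k. f (bary x K)))
      + (1 - real ((n + 1) div k) / real (n + 1)) *
         ((\<Sum>i = 0..n. f (x i)) / real (n + 1))"
proof -
  interpret simplex x n using dim inj indep by unfold_locales
  have Sd: "convex hull (x ` {0..n}) = S" by (simp add: S_def)
  have KKd: "{K. K \<subseteq> {0..n} \<and> card K = k} = KK k" by (simp add: KK_def)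
  have cf: "convex_on S f" using conv Sd by simp
  define B where "B = (1 / real ((n + 1) choose k)) * (\<Sum>K\<in>KK k. f (bary x K))"
  define X where "X = (\<Sum>i\<in>{0..n}. f (x i)) / real (n + 1)"
  define al where "al = real ((n + 1) div k) / real (n + 1)"
  have m: "Avg f S \<le> (1 / real k) * B + (1 - 1 / real k) * X"
    using avg_bound[OF cf k] unfolding B_def X_def .
  have b: "B \<le> X" using bary_le[OF cf k] unfolding B_def X_def .
  have a: "al \<le> 1 / real k"
  proof -
    have "(n + 1) div k * k \<le> n + 1" using div_mult_mod_eq[of "n+1" k] by linarith
    then have "real ((n + 1) div k) * real k \<le> real (n + 1)" by (metis of_nat_le_iff of_nat_mult)
    then show ?thesis unfolding al_def using k by (intro aux3) auto
  qed
  have "(1 / real k - al) * (B - X) \<le> 0" using a b by (intro mult_nonneg_nonpos) auto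
  moreover have "(1 / real k) * B + (1 - 1 / real k) * X - (al * B + (1 - al) * X) = (1 / real k - al) * (B - X)"
  proof -
    have kz: "real k \<noteq> 0" using k by simp
    then show ?thesis by (simp add: field_simps)
  qed
  ultimately have "Avg f S \<le> al * B + (1 - al) * X" using m by linarith
  then show ?thesis unfolding Sd KKd B_def X_def al_def .
qed

end
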